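(* Let $\mathcal{H}$ be a real or complex Hilbert space, $\Sigma\subset\mathcal{H}$ a cone, and $f:\mathcal{H}\to\mathbb{R}\cup\{+\infty\}$ a proper, coercive, continuous regularizer. Assume that for some $t>f(0)$ the level set $\mathcal{L}(f,t)=\{y\in\mathcal{H}:f(y)\le t\}$ is convex. Then there exists a family of atoms $\mathcal{A}\subset\Sigma$ such that $$\mathcal{T}_{\mathcal{A}}(\Sigma)\subset\mathbb{R}_+^*\cdot\mathcal{T}_f(\Sigma).$$
   Context: $\Sigma$ is a cone if $tz\in\Sigma$ for all $t\ge0$, $z\in\Sigma$. Coercive: $f(x)\to+\infty$ as $\|x\|_{\mathcal{H}}\to+\infty$. Atomic norm of $\mathcal{A}$: $\|x\|_{\mathcal{A}}=\inf\{s\ge0:x\in s\cdot\overline{\mathrm{conv}}(\mathcal{A})\}$ ($+\infty$ if none). Descent sets: $\mathcal{T}_f(\Sigma)=\bigcup_{x\in\Sigma}\{z:f(x+z)\le f(x)\}$ and $\mathcal{T}_{\mathcal{A}}(\Sigma)=\bigcup_{x\in\Sigma}\{z:\|x+z\|_{\mathcal{A}}\le\|x\|_{\mathcal{A}}\}$. $\mathbb{R}_+^*\cdot T=\{\lambda z:\lambda>0,z\in T\}$. *)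

theory Defs
  imports "HOL-Analysis.Analysis" "HOL-Library.Extended_Real"
begin

text \<open>Atomic norm: inf of s \<ge> 0 with x in s * closed convex hull of A; +\<infinity> if none (Inf {} = \<infinity>).\<close>
definition atomic_norm :: "'a::real_normed_vector set \<Rightarrow> 'a \<Rightarrow> ereal" where
  "atomic_norm A x = Inf {ereal s | s. s \<ge> 0 \<and> x \<in> (\<lambda>y. s *\<^sub>R y) ` closure (convex hull A)}"

definition descent_set_fun :: "('a::real_vector \<Rightarrow> ereal) \<Rightarrow> 'a set \<Rightarrow> 'a set" where
  "descent_set_fun f \<Sigma> = (\<Union>x\<in>\<Sigma>. {z. f (x + z) \<le> f x})"

definition descent_set_atoms :: "'a::real_normed_vector set \<Rightarrow> 'a set \<Rightarrow> 'a set" where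
  "descent_set_atoms A \<Sigma> = (\<Union>x\<in>\<Sigma>. {z. atomic_norm A (x + z) \<le> atomic_norm A x})"

definition pos_scale :: "'a::real_vector set \<Rightarrow> 'a set" where
  "pos_scale T = {l *\<^sub>R z | l z. l > 0 \<and> z \<in> T}"

end

theory Submission
  imports Defs
begin

lemma scale_in_convex:
  fixes K :: "'a::real_vector set"
  assumes "convex K" "0 \<in> K" "y \<in> K" "0 \<le> s" "s < u"
  shows "inverse u *\<^sub>R (s *\<^sub>R y) \<in> K"
proof -
  have u: "u > 0" using assms by linarith
  have "(s/u) *\<^sub>R y + (1 - s/u) *\<^sub>R 0 \<in> K"
    by (rule convexD[OF assms(1) assms(3) assms(2)]) (use assms u in auto)
  thus ?thesis by (simp add: divide_inverse_commute)
qed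

lemma ray_closed:
  fixes p :: "'a::real_normed_vector"
  assumes "closed C" "r0 > 0" "\<forall>u>r0. inverse u *\<^sub>R p \<in> C"
  shows "inverse r0 *\<^sub>R p \<in> C"
proof (rule Lim_in_closed_set[OF assms(1), where F="at_right r0" and f="\<lambda>u. inverse u *\<^sub>R p"])
  show "\<forall>\<^sub>F x in at_right r0. inverse x *\<^sub>R p \<in> C"
    using eventually_at_right_less[of r0] by eventually_elim (use assms in auto)
  show "at_right r0 \<noteq> bot" by simp
  show "((\<lambda>u. inverse u *\<^sub>R p) \<longlongrightarrow> inverse r0 *\<^sub>R p) (at_right r0)"
    using assms(2) by (intro tendsto_intros) auto
qed

theorem lemma1:
  fixes \<Sigma> :: "'a::{real_inner, complete_space} set"
    and f :: "'a \<Rightarrow> ereal"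
  assumes cone: "cone \<Sigma>"
    and proper_not_minf: "\<forall>x. f x \<noteq> -\<infinity>"
    and proper_finite: "\<exists>x. f x \<noteq> \<infinity>"
    and coercive: "(f \<longlongrightarrow> \<infinity>) at_infinity"
    and cont: "continuous_on UNIV f"
    and level: "\<exists>t::real. ereal t > f 0 \<and> convex {y. f y \<le> ereal t}"
  shows "\<exists>A. A \<subseteq> \<Sigma> \<and> descent_set_atoms A \<Sigma> \<subseteq> pos_scale (descent_set_fun f \<Sigma>)"
proof -
  obtain t :: real where t0: "ereal t > f 0" and cvx: "convex {y. f y \<le> ereal t}"
    using level by blast
  define C where "C = {y. f y \<le> ereal t}"
  define A where "A = \<Sigma> \<inter> C"
  define K where "K = closure (convex hull A)"
  have closedC: "closed C"
  proof -
    have "closed (f -` {..ereal t} \<inter> UNIV)"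
      using cont continuous_on_closed_vimage[of UNIV f] by simp
    moreover have "f -` {..ereal t} \<inter> UNIV = C" unfolding C_def by auto
    ultimately show ?thesis by simp
  qed
  have convC: "convex C" using cvx C_def by simp
  have KC: "K \<subseteq> C"
    unfolding K_def A_def
    by (intro closure_minimal hull_minimal closedC convC) auto
  have convK: "convex K" unfolding K_def by (simp add: convex_closure)
  have AK: "A \<subseteq> K" unfolding K_def by (meson closure_subset hull_subset subset_trans)
  have contf: "\<And>p. isCont f p" using cont by (simp add: continuous_on_eq_continuous_at)
  obtain b where b: "\<And>y. f y \<le> ereal t \<Longrightarrow> norm y < b"
  proof -
    have "\<forall>\<^sub>F y in at_infinity. f y > ereal t"
      using coercive by (rule order_tendstoD) simp
    then obtain b where "\<forall>y. b \<le> norm y \<longrightarrow> f y > ereal t"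
      unfolding eventually_at_infinity by blast
    hence "\<And>y. f y \<le> ereal t \<Longrightarrow> norm y < b" by (meson leD not_le)
    thus ?thesis using that by blast
  qed
  have bpos: "b > 0" using b[of 0] t0 by auto
  obtain e where e: "e > 0" "\<And>y. norm y < e \<Longrightarrow> f y \<le> ereal t"
  proof -
    have "(f \<longlongrightarrow> f 0) (at 0)" using contf[of 0] by (simp add: isCont_def)
    hence "\<forall>\<^sub>F y in at 0. f y < ereal t" using t0 by (rule order_tendstoD)
    then obtain d where d: "d > 0" "\<And>y. y \<noteq> 0 \<Longrightarrow> dist y 0 < d \<Longrightarrow> f y < ereal t"
      unfolding eventually_at by blast
    have fy: "f y \<le> ereal t" if ny: "norm y < d" for y
    proof (cases "y = 0")
      case True thus ?thesis using t0 by simp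
    next
      case False thus ?thesis using d(2)[of y] ny by simp
    qed
    show ?thesis by (rule that[OF d(1) fy])
  qed
  define N where "N = atomic_norm A"
  have N_def': "\<And>p. N p = Inf {ereal s | s. s \<ge> 0 \<and> p \<in> (\<lambda>y. s *\<^sub>R y) ` K}"
    unfolding N_def atomic_norm_def K_def by simp
  have Nlow: "\<And>p u. N p < ereal u \<Longrightarrow> \<exists>s y. 0 \<le> s \<and> s < u \<and> y \<in> K \<and> p = s *\<^sub>R y"
  proof -
    fix p u assume "N p < ereal u"
    then obtain v where "v \<in> {ereal s | s. s \<ge> 0 \<and> p \<in> (\<lambda>y. s *\<^sub>R y) ` K}" "v < ereal u"
      unfolding N_def' Inf_less_iff by blast
    thus "\<exists>s y. 0 \<le> s \<and> s < u \<and> y \<in> K \<and> p = s *\<^sub>R y" by auto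
  qed
  have Nup: "\<And>p s y. 0 \<le> s \<Longrightarrow> y \<in> K \<Longrightarrow> p = s *\<^sub>R y \<Longrightarrow> N p \<le> ereal s"
    unfolding N_def' by (rule Inf_lower) blast
  have Nge: "\<And>p. N p \<ge> 0"
    unfolding N_def' by (rule Inf_greatest) auto
  have "descent_set_atoms A \<Sigma> \<subseteq> pos_scale (descent_set_fun f \<Sigma>)"
  proof
    fix z assume "z \<in> descent_set_atoms A \<Sigma>"
    then obtain x where x: "x \<in> \<Sigma>" and le: "N (x + z) \<le> N x"
      unfolding descent_set_atoms_def N_def by blast
    have z0\<Sigma>: "0 \<in> \<Sigma>" using cone x unfolding cone_def by (metis order_refl scale_zero_left)
    have zA: "0 \<in> A" unfolding A_def C_def using z0\<Sigma> t0 by auto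
    have zK: "0 \<in> K" using zA AK by auto
    show "z \<in> pos_scale (descent_set_fun f \<Sigma>)"
    proof (cases "x = 0")
      case True
      have N0: "N 0 \<le> 0" using Nup[of 0 0 0] zK by (simp add: zero_ereal_def)
      have "norm z \<le> 0"
      proof (rule field_le_epsilon)
        fix u :: real assume u: "u > 0"
        have "N z < ereal (u / b)" using le N0 True u bpos by (simp add: order.strict_trans1)
        then obtain s y where sy: "0 \<le> s" "s < u / b" "y \<in> K" "z = s *\<^sub>R y" using Nlow by blast
        have "norm y < b" using b sy KC C_def by blast
        hence "norm z \<le> s * b" using sy by (simp add: mult_left_mono)
        also have "\<dots> \<le> u" using sy bpos by (simp add: pos_less_divide_eq less_imp_le)
        finally show "norm z \<le> 0 + u" by simp
      qed
      hence "z = 0" by simp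
      moreover have "0 \<in> descent_set_fun f \<Sigma>" unfolding descent_set_fun_def using z0\<Sigma> by auto
      ultimately have "z = 1 *\<^sub>R 0 \<and> (1::real) > 0 \<and> 0 \<in> descent_set_fun f \<Sigma>" by simp
      thus ?thesis unfolding pos_scale_def by blast
    next
      case False
      define s0 where "s0 = 2 * norm x / e"
      have s0pos: "s0 > 0" using False e unfolding s0_def by simp
      have "norm (inverse s0 *\<^sub>R x) < e"
        using False e s0pos unfolding s0_def by (simp add: field_simps)
      hence "inverse s0 *\<^sub>R x \<in> A" unfolding A_def C_def using e cone x s0pos
        by (auto simp: cone_def)
      hence "N x \<le> ereal s0" using Nup[of s0 "inverse s0 *\<^sub>R x" x] AK s0pos by auto
      then obtain r0 where r0: "N x = ereal r0" using Nge[of x]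
        by (cases "N x") auto
      have r0pos: "r0 > 0"
      proof -
        have "N x \<ge> ereal (norm x / b)"
          unfolding N_def'
        proof (rule Inf_greatest)
          fix v assume "v \<in> {ereal s | s. s \<ge> 0 \<and> x \<in> (\<lambda>y. s *\<^sub>R y) ` K}"
          then obtain s y where "v = ereal s" "0 \<le> s" "y \<in> K" "x = s *\<^sub>R y" by blast
          moreover have "norm y < b" using b \<open>y \<in> K\<close> KC C_def by blast
          ultimately have "norm x \<le> s * b" by (simp add: mult_left_mono)
          thus "ereal (norm x / b) \<le> v" using bpos \<open>v = ereal s\<close> by (simp add: divide_le_eq)
        qed
        moreover have "norm x / b > 0" using False bpos by simp
        ultimately show ?thesis using r0 by simp
      qed
      have ray: "\<And>p. N p \<le> ereal r0 \<Longrightarrow> inverse r0 *\<^sub>R p \<in> C"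
      proof -
        fix p assume Np: "N p \<le> ereal r0"
        show "inverse r0 *\<^sub>R p \<in> C"
        proof (rule ray_closed[OF closedC r0pos], intro allI impI)
          fix u assume "u > r0"
          hence "N p < ereal u" using Np by (simp add: order.strict_trans1)
          then obtain s y where sy: "0 \<le> s" "s < u" "y \<in> K" "p = s *\<^sub>R y" using Nlow by blast
          thus "inverse u *\<^sub>R p \<in> C" using scale_in_convex[OF convK zK sy(3,1,2)] KC by auto
        qed
      qed
      define x' where "x' = inverse r0 *\<^sub>R x"
      have x'S: "x' \<in> \<Sigma>" using cone x r0pos unfolding x'_def cone_def by simp
      have fx'le: "f x' \<le> ereal t" using ray[of x] r0 unfolding x'_def C_def by simp
      have fx': "f x' \<ge> ereal t"
      proof (rule ccontr)
        assume "\<not> f x' \<ge> ereal t"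
        hence lt: "f x' < ereal t" by simp
        have "((\<lambda>s. f (inverse s *\<^sub>R x)) \<longlongrightarrow> f x') (at_left r0)"
          unfolding x'_def
          by (rule isCont_tendsto_compose[OF contf]) (use r0pos in \<open>intro tendsto_intros, auto\<close>)
        hence ev1: "\<forall>\<^sub>F s in at_left r0. f (inverse s *\<^sub>R x) < ereal t" using lt by (rule order_tendstoD)
        have ev2: "\<forall>\<^sub>F s in at_left r0. s \<in> {0<..<r0}" using eventually_at_left_real r0pos by blast
        have "\<forall>\<^sub>F s in at_left r0. False"
          using ev1 ev2
        proof eventually_elim
          case (elim s)
          hence "inverse s *\<^sub>R x \<in> A" unfolding A_def C_def using cone x
            by (auto simp: cone_def)
          hence "N x \<le> ereal s" using Nup[of s "inverse s *\<^sub>R x" x] AK elim by auto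
          thus False using r0 elim by simp
        qed
        thus False by simp
      qed
      define w where "w = inverse r0 *\<^sub>R z"
      have "f (x' + w) \<le> ereal t"
        using ray[of "x + z"] le r0 unfolding x'_def w_def C_def by (simp add: scaleR_add_right)
      hence "w \<in> descent_set_fun f \<Sigma>" unfolding descent_set_fun_def using x'S fx' by force
      moreover have "z = r0 *\<^sub>R w" unfolding w_def using r0pos by simp
      ultimately show ?thesis unfolding pos_scale_def using r0pos by blast
    qed
  qed
  moreover have "A \<subseteq> \<Sigma>" unfolding A_def by simp
  ultimately show ?thesis by blast
qed

end
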